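(* Let $G$ and $H$ be groups, $\Psi\colon G\to\operatorname{Aut}H$ a group homomorphism, and $B\colon H\to G$ a relative Rota--Baxter operator on $H$ with respect to $(G,\Psi)$. If $\varphi$ lies in the center of $\operatorname{Aut}H$, then $B\varphi\colon H\to G$ is also a relative Rota--Baxter operator on $H$ with respect to $(G,\Psi)$.
   Context: A relative Rota--Baxter operator on $H$ with respect to $(G,\Psi)$ is a map $B\colon H\to G$ with $B(h)B(k)=B(h\Psi_{B(h)}(k))$ for all $h,k\in H$. *)

theory Defs
  imports "HOL-Algebra.Algebra"
begin

definition group_center :: "('a, 'b) monoid_scheme \<Rightarrow> 'a set" where
  "group_center G = {z \<in> carrier G. \<forall>x \<in> carrier G. z \<otimes>\<^bsub>G\<^esub> x = x \<otimes>\<^bsub>G\<^esub> z}"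

definition rel_RB_operator ::
  "('g, 'c) monoid_scheme \<Rightarrow> ('h, 'd) monoid_scheme \<Rightarrow> ('g \<Rightarrow> 'h \<Rightarrow> 'h) \<Rightarrow> ('h \<Rightarrow> 'g) \<Rightarrow> bool" where
  "rel_RB_operator G H Psi B \<longleftrightarrow>
     B \<in> carrier H \<rightarrow> carrier G \<and>
     (\<forall>h \<in> carrier H. \<forall>k \<in> carrier H.
        B h \<otimes>\<^bsub>G\<^esub> B k = B (h \<otimes>\<^bsub>H\<^esub> Psi (B h) k))"

end

theory Submission
  imports Defs
begin

lemma comm_aux:
  assumes "f \<in> auto H" "g \<in> auto H"
    and "f \<otimes>\<^bsub>AutoGroup H\<^esub> g = g \<otimes>\<^bsub>AutoGroup H\<^esub> f" "x \<in> carrier H"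
  shows "f (g x) = g (f x)"
proof -
  have fb: "f \<in> Bij (carrier H)" "g \<in> Bij (carrier H)" using assms(1,2) by (auto simp: auto_def)
  have "compose (carrier H) f g x = compose (carrier H) g f x"
    using assms(3) fb by (simp add: AutoGroup_def BijGroup_def)
  thus ?thesis using assms(4) by (simp add: compose_def)
qed

theorem corollary3p7:
  fixes G :: "('g, 'c) monoid_scheme" and H :: "('h, 'd) monoid_scheme"
    and Psi :: "'g \<Rightarrow> 'h \<Rightarrow> 'h" and B :: "'h \<Rightarrow> 'g" and \<phi> :: "'h \<Rightarrow> 'h"
  assumes "group G" and "group H"
    and "Psi \<in> hom G (AutoGroup H)"
    and "rel_RB_operator G H Psi B"
    and "\<phi> \<in> group_center (AutoGroup H)"
  shows "rel_RB_operator G H Psi (B \<circ> \<phi>)"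
proof -
  have phiA: "\<phi> \<in> auto H" and phic: "\<forall>x\<in>auto H. \<phi> \<otimes>\<^bsub>AutoGroup H\<^esub> x = x \<otimes>\<^bsub>AutoGroup H\<^esub> \<phi>"
    using assms(5) by (auto simp: group_center_def AutoGroup_def)
  have phih: "\<phi> \<in> hom H H" using phiA by (simp add: auto_def)
  have phiC: "\<And>x. x \<in> carrier H \<Longrightarrow> \<phi> x \<in> carrier H" using phih by (auto simp: hom_def)
  have Bf: "B \<in> carrier H \<rightarrow> carrier G" and BRB: "\<And>h k. h \<in> carrier H \<Longrightarrow> k \<in> carrier H \<Longrightarrow>
        B h \<otimes>\<^bsub>G\<^esub> B k = B (h \<otimes>\<^bsub>H\<^esub> Psi (B h) k)"
    using assms(4) by (auto simp: rel_RB_operator_def)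
  have PsiA: "\<And>g. g \<in> carrier G \<Longrightarrow> Psi g \<in> auto H"
    using assms(3) by (auto simp: hom_def AutoGroup_def)
  have PsiC: "\<And>g x. g \<in> carrier G \<Longrightarrow> x \<in> carrier H \<Longrightarrow> Psi g x \<in> carrier H"
    using PsiA by (auto simp: auto_def hom_def)
  show ?thesis unfolding rel_RB_operator_def
  proof (intro conjI ballI)
    show "B \<circ> \<phi> \<in> carrier H \<rightarrow> carrier G" using Bf phiC by auto
  next
    fix h k assume h: "h \<in> carrier H" and k: "k \<in> carrier H"
    let ?g = "B (\<phi> h)"
    have g: "?g \<in> carrier G" using Bf phiC h by auto
    have c: "\<phi> (Psi ?g k) = Psi ?g (\<phi> k)"
      using comm_aux[OF phiA PsiA[OF g] phic[rule_format, OF PsiA[OF g]] k] .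
    have "(B \<circ> \<phi>) h \<otimes>\<^bsub>G\<^esub> (B \<circ> \<phi>) k = B (\<phi> h \<otimes>\<^bsub>H\<^esub> Psi ?g (\<phi> k))"
      using BRB[OF phiC[OF h] phiC[OF k]] by simp
    also have "\<phi> h \<otimes>\<^bsub>H\<^esub> Psi ?g (\<phi> k) = \<phi> (h \<otimes>\<^bsub>H\<^esub> Psi ?g k)"
      using phih h PsiC[OF g k] c by (simp add: hom_mult)
    finally show "(B \<circ> \<phi>) h \<otimes>\<^bsub>G\<^esub> (B \<circ> \<phi>) k = (B \<circ> \<phi>) (h \<otimes>\<^bsub>H\<^esub> Psi ((B \<circ> \<phi>) h) k)"
      by simp
  qed
qed

end
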